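(* Let $(M,d)$ be a compact metric space, $S$ a semitopological semigroup which is left reversible or left amenable, and $\{T_s:s\in S\}$ a representation of $S$ on $M$ such that $S\times M\ni(s,x)\mapsto T_sx$ is jointly continuous and $\mathcal S=\{T_s:s\in S\}$ is (as a semigroup under composition) generated by uniformly asymptotically regular mappings. Let $\bar{\mathcal S}$ be the closure of $\mathcal S$ in $M^M$ with respect to the topology of pointwise convergence. Then there exists $r\in\bar{\mathcal S}$ with $r\circ r=r$ and $r(M)=\mathrm{Fix}\,\mathcal S$.
   Context: Uniformly asymptotically regular: $\lim_n\sup_{x\in M}d(T^{n+1}x,T^nx)=0$. Semitopological semigroup: Hausdorff topology making $s\mapsto ts$, $s\mapsto st$ continuous. Representation: $T_{st}=T_s\circ T_t$. Left reversible: any two closed right ideals (sets $I$ with $IS\subset I$) intersect. Left amenable: there is $\mu\in LUC(S)^*$ with $\|\mu\|=\mu(1)=1$, $\mu(l_sf)=\mu(f)$, where $(l_sf)(t)=f(st)$ and $LUC(S)$ consists of bounded continuous $f$ with $s\mapsto l_sf$ sup-norm continuous. $\mathrm{Fix}\,\mathcal S$ is the set of common fixed points. *)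

theory Defs
  imports "HOL-Analysis.Analysis"
begin

definition semitopological_semigroup :: "('s::{t2_space,semigroup_mult}) itself \<Rightarrow> bool" where
  "semitopological_semigroup _ \<longleftrightarrow>
     (\<forall>t::'s. continuous_on UNIV (\<lambda>s. t * s) \<and> continuous_on UNIV (\<lambda>s. s * t))"

definition right_ideal :: "('s::semigroup_mult) set \<Rightarrow> bool" where
  "right_ideal I \<longleftrightarrow> I \<noteq> {} \<and> (\<forall>a\<in>I. \<forall>s. a * s \<in> I)"

definition left_reversible :: "('s::{topological_space,semigroup_mult}) itself \<Rightarrow> bool" where
  "left_reversible _ \<longleftrightarrow>
     (\<forall>I J :: 's set. closed I \<and> right_ideal I \<and> closed J \<and> right_ideal J \<longrightarrow> I \<inter> J \<noteq> {})"

definition ltrans :: "'s::semigroup_mult \<Rightarrow> ('s \<Rightarrow> real) \<Rightarrow> ('s \<Rightarrow> real)" where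
  "ltrans s f = (\<lambda>t. f (s * t))"

text \<open>LUC(S): bounded continuous real functions f such that s \<mapsto> l_s f is
  continuous into the sup-norm space of bounded functions.\<close>
definition LUC :: "('s::{topological_space,semigroup_mult} \<Rightarrow> real) set" where
  "LUC = {f. bounded (range f) \<and> continuous_on UNIV f \<and>
           (\<forall>s0. \<forall>e>0. \<exists>U. open U \<and> s0 \<in> U \<and>
               (\<forall>s\<in>U. \<forall>t. \<bar>ltrans s f t - ltrans s0 f t\<bar> < e))}"

definition left_amenable :: "('s::{topological_space,semigroup_mult}) itself \<Rightarrow> bool" where
  "left_amenable _ \<longleftrightarrow>
     (\<exists>\<mu> :: ('s \<Rightarrow> real) \<Rightarrow> real.
        (\<forall>f\<in>LUC. \<forall>g\<in>LUC. \<mu> (\<lambda>t. f t + g t) = \<mu> f + \<mu> g) \<and>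
        (\<forall>f\<in>LUC. \<forall>c. \<mu> (\<lambda>t. c * f t) = c * \<mu> f) \<and>
        (\<forall>f\<in>LUC. \<bar>\<mu> f\<bar> \<le> (SUP t. \<bar>f t\<bar>)) \<and>
        \<mu> (\<lambda>_. 1) = 1 \<and>
        (\<forall>f\<in>LUC. \<forall>s. \<mu> (ltrans s f) = \<mu> f))"

definition unif_asymp_regular :: "('m::metric_space \<Rightarrow> 'm) \<Rightarrow> bool" where
  "unif_asymp_regular f \<longleftrightarrow>
     (\<forall>n. bdd_above (range (\<lambda>x. dist ((f ^^ Suc n) x) ((f ^^ n) x)))) \<and>
     (\<lambda>n. SUP x. dist ((f ^^ Suc n) x) ((f ^^ n) x)) \<longlonglongrightarrow> 0"

inductive_set gen_semigroup :: "('a \<Rightarrow> 'a) set \<Rightarrow> ('a \<Rightarrow> 'a) set" for G where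
  base: "g \<in> G \<Longrightarrow> g \<in> gen_semigroup G"
| comp: "f \<in> gen_semigroup G \<Longrightarrow> g \<in> gen_semigroup G \<Longrightarrow> f \<circ> g \<in> gen_semigroup G"

end

theory Submission
  imports Defs
begin


lemma cont_comp_univ:
  "continuous_on UNIV f \<Longrightarrow> continuous_on UNIV g \<Longrightarrow> continuous_on UNIV (\<lambda>x. f (g x))"
  by (metis continuous_on_compose2 subset_UNIV)

lemma cont_section:
  assumes "continuous_on UNIV (\<lambda>(s, x). T s x)"
  shows "continuous_on UNIV (\<lambda>t. T t x)" "continuous_on UNIV (T a)"
proof -
  have "continuous_on UNIV (\<lambda>t. (\<lambda>(s, x). T s x) (t, x))"
    by (rule cont_comp_univ[OF assms]) (intro continuous_intros)
  then show "continuous_on UNIV (\<lambda>t. T t x)" by simp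
  have "continuous_on UNIV (\<lambda>y. (\<lambda>(s, x). T s x) (a, y))"
    by (rule cont_comp_univ[OF assms]) (intro continuous_intros)
  then show "continuous_on UNIV (T a)" by simp
qed

lemma tube:
  fixes T :: "'s::topological_space \<Rightarrow> 'm::metric_space \<Rightarrow> 'm"
  assumes cM: "compact (UNIV::'m set)" and cT: "continuous_on UNIV (\<lambda>(s, x). T s x)" and dp: "\<delta> > 0"
  shows "\<exists>U. open U \<and> s0 \<in> U \<and> (\<forall>s\<in>U. \<forall>y. dist (T s y) (T s0 y) < \<delta>)"
proof -
  define W where "W y = (\<lambda>(s, x). T s x) -` ball (T s0 y) (\<delta>/2)" for y
  have oW: "open (W y)" for y
    unfolding W_def using cT[unfolded continuous_on_open_vimage[OF open_UNIV]] open_ball by auto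
  have mem: "(s0,y) \<in> W y" for y using dp by (simp add: W_def)
  have ex: "\<exists>A B. open A \<and> open B \<and> (s0,y) \<in> A \<times> B \<and> A \<times> B \<subseteq> W y" for y
  proof -
    obtain A B where "open A" "open B" "(s0,y) \<in> A \<times> B" "A \<times> B \<subseteq> W y"
      by (rule open_prod_elim[OF oW mem])
    then show ?thesis by blast
  qed
  have "\<forall>y. \<exists>AB. open (fst AB) \<and> open (snd AB) \<and> (s0,y) \<in> fst AB \<times> snd AB \<and> fst AB \<times> snd AB \<subseteq> W y"
  proof
    fix y
    from ex[of y] obtain A B where "open A \<and> open B \<and> (s0,y) \<in> A \<times> B \<and> A \<times> B \<subseteq> W y" by blast
    then show "\<exists>AB. open (fst AB) \<and> open (snd AB) \<and> (s0,y) \<in> fst AB \<times> snd AB \<and> fst AB \<times> snd AB \<subseteq> W y"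
      by (intro exI[of _ "(A,B)"]) simp
  qed
  from choice[OF this] obtain ff where ff: "\<forall>y. open (fst (ff y)) \<and> open (snd (ff y)) \<and> (s0,y) \<in> fst (ff y) \<times> snd (ff y) \<and> fst (ff y) \<times> snd (ff y) \<subseteq> W y"
    by blast
  define UA where "UA y = fst (ff y)" for y
  define VB where "VB y = snd (ff y)" for y
  have H: "\<forall>y. open (UA y) \<and> open (VB y) \<and> (s0,y) \<in> UA y \<times> VB y \<and> UA y \<times> VB y \<subseteq> W y"
    using ff by (simp add: UA_def VB_def)
  have "UNIV \<subseteq> (\<Union>y\<in>UNIV. VB y)" using H by auto
  obtain C where C0: "C \<subseteq> UNIV" "finite C" "UNIV \<subseteq> (\<Union>y\<in>C. VB y)"
    by (rule compactE_image[OF cM, of UNIV VB]) (use H in auto)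
  then have C: "finite C" "UNIV \<subseteq> (\<Union>y\<in>C. VB y)" by auto
  define U where "U = (\<Inter>y\<in>C. UA y)"
  have "open U" unfolding U_def using C(1) H by (intro open_INT) auto
  moreover have "s0 \<in> U" using H by (auto simp: U_def)
  moreover have "\<forall>s\<in>U. \<forall>y. dist (T s y) (T s0 y) < \<delta>"
  proof (intro ballI allI)
    fix s y assume sU: "s \<in> U"
    from C obtain c where c: "c \<in> C" "y \<in> VB c" by auto
    have "(s,y) \<in> UA c \<times> VB c" "(s0,y) \<in> UA c \<times> VB c" using c sU H by (auto simp: U_def)
    then have "(s,y) \<in> W c" "(s0,y) \<in> W c" using H by blast+
    hence "dist (T s y) (T s0 c) < \<delta>/2" "dist (T s0 y) (T s0 c) < \<delta>/2"
      by (auto simp: W_def dist_commute)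
    then show "dist (T s y) (T s0 y) < \<delta>" by (rule dist_triangle_half_l)
  qed
  ultimately show ?thesis by blast
qed

lemma dist_diff_le:
  fixes a b c d :: "'m::metric_space"
  shows "\<bar>dist a b - dist c d\<bar> \<le> dist a c + dist b d"
  using dist_triangle[of a b c] dist_triangle[of c b d] dist_triangle[of c d a] dist_triangle[of a d b]
  by (simp add: dist_commute abs_le_iff)

lemma phi_LUC:
  fixes T :: "'s::{topological_space,semigroup_mult} \<Rightarrow> 'm::metric_space \<Rightarrow> 'm"
  assumes cM: "compact (UNIV::'m set)" and cT: "continuous_on UNIV (\<lambda>(s, x). T s x)"
    and mult: "\<And>s t. T (s * t) = T s \<circ> T t"
    and ch: "continuous_on UNIV (h::'m\<Rightarrow>'m)" and ck: "continuous_on UNIV (k::'m\<Rightarrow>'m)"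
  shows "(\<lambda>t. dist (h (T t x)) (k (T t x))) \<in> LUC"
  unfolding LUC_def mem_Collect_eq
proof (intro conjI allI impI)
  obtain B where B: "\<forall>y::'m. \<forall>z::'m. dist y z \<le> (B::real)"
    using compact_imp_bounded[OF cM] unfolding bounded_two_points by blast
  then show "bounded (range (\<lambda>t. dist (h (T t x)) (k (T t x))))"
    unfolding bounded_iff using B by (intro exI[of _ B]) auto
  have c1: "continuous_on UNIV (\<lambda>t. T t x)" using cont_section[OF cT] by blast
  show "continuous_on UNIV (\<lambda>t. dist (h (T t x)) (k (T t x)))"
    by (intro continuous_intros cont_comp_univ[OF ch c1] cont_comp_univ[OF ck c1])
  fix s0 :: 's and e :: real assume e: "e > 0"
  have uh: "uniformly_continuous_on UNIV h" and uk: "uniformly_continuous_on UNIV k"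
    using compact_uniformly_continuous cM ch ck by blast+
  obtain d1 where d1: "d1 > 0" "\<forall>x\<in>UNIV. \<forall>x'\<in>UNIV. dist x' x < d1 \<longrightarrow> dist (h x') (h x) < e/2"
    using uh[unfolded uniformly_continuous_on_def, rule_format, of "e/2"] e by auto
  obtain d2 where d2: "d2 > 0" "\<forall>x\<in>UNIV. \<forall>x'\<in>UNIV. dist x' x < d2 \<longrightarrow> dist (k x') (k x) < e/2"
    using uk[unfolded uniformly_continuous_on_def, rule_format, of "e/2"] e by auto
  obtain U where U: "open U" "s0 \<in> U" "\<forall>s\<in>U. \<forall>y. dist (T s y) (T s0 y) < min d1 d2"
    using tube[OF cM cT, of "min d1 d2" s0] d1 d2 by auto
  show "\<exists>U. open U \<and> s0 \<in> U \<and> (\<forall>s\<in>U. \<forall>t. \<bar>ltrans s (\<lambda>t. dist (h (T t x)) (k (T t x))) t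
             - ltrans s0 (\<lambda>t. dist (h (T t x)) (k (T t x))) t\<bar> < e)"
  proof (intro exI conjI ballI allI)
    fix s t assume sU: "s \<in> U"
    define u where "u = T s (T t x)"
    define v where "v = T s0 (T t x)"
    have "dist u v < min d1 d2" using U sU by (simp add: u_def v_def)
    then have "dist (h u) (h v) < e/2" "dist (k u) (k v) < e/2" using d1 d2 by auto
    moreover have "ltrans s (\<lambda>t. dist (h (T t x)) (k (T t x))) t = dist (h u) (k u)"
      "ltrans s0 (\<lambda>t. dist (h (T t x)) (k (T t x))) t = dist (h v) (k v)"
      by (simp_all add: ltrans_def mult u_def v_def)
    ultimately show "\<bar>ltrans s (\<lambda>t. dist (h (T t x)) (k (T t x))) t
             - ltrans s0 (\<lambda>t. dist (h (T t x)) (k (T t x))) t\<bar> < e"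
      using dist_diff_le[of "h u" "k u" "h v" "k v"] by linarith
  qed (use U in auto)
qed



lemma LUC_const: "(\<lambda>_. c) \<in> LUC"
  unfolding LUC_def by (auto simp: ltrans_def intro!: exI[of _ UNIV])

lemma LUC_add:
  assumes f: "f \<in> LUC" and g: "g \<in> LUC"
  shows "(\<lambda>t. f t + g t) \<in> LUC"
  unfolding LUC_def mem_Collect_eq
proof (intro conjI allI impI)
  from f g obtain a b where "\<forall>t. norm (f t) \<le> a" "\<forall>t. norm (g t) \<le> b"
    unfolding LUC_def bounded_iff by auto
  then show "bounded (range (\<lambda>t. f t + g t))" unfolding bounded_iff
    by (intro exI[of _ "a+b"]) (auto intro: order.trans[OF abs_triangle_ineq] add_mono)
  show "continuous_on UNIV (\<lambda>t. f t + g t)"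
    using f g unfolding LUC_def by (auto intro: continuous_intros)
  fix s0 :: 'a and e :: real assume e: "e > 0"
  obtain U where U: "open U" "s0 \<in> U" "\<forall>s\<in>U. \<forall>t. \<bar>ltrans s f t - ltrans s0 f t\<bar> < e/2"
  proof -
    have "\<forall>e>0. \<exists>U. open U \<and> s0 \<in> U \<and> (\<forall>s\<in>U. \<forall>t. \<bar>ltrans s f t - ltrans s0 f t\<bar> < e)"
      using f unfolding LUC_def by blast
    then show ?thesis using e that by (meson half_gt_zero)
  qed
  obtain V where V: "open V" "s0 \<in> V" "\<forall>s\<in>V. \<forall>t. \<bar>ltrans s g t - ltrans s0 g t\<bar> < e/2"
  proof -
    have "\<forall>e>0. \<exists>U. open U \<and> s0 \<in> U \<and> (\<forall>s\<in>U. \<forall>t. \<bar>ltrans s g t - ltrans s0 g t\<bar> < e)"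
      using g unfolding LUC_def by blast
    then show ?thesis using e that by (meson half_gt_zero)
  qed
  show "\<exists>U. open U \<and> s0 \<in> U \<and> (\<forall>s\<in>U. \<forall>t. \<bar>ltrans s (\<lambda>t. f t + g t) t - ltrans s0 (\<lambda>t. f t + g t) t\<bar> < e)"
  proof (intro exI[of _ "U \<inter> V"] conjI ballI allI)
    fix s t assume "s \<in> U \<inter> V"
    then have hh: "\<bar>ltrans s f t - ltrans s0 f t\<bar> < e/2" "\<bar>ltrans s g t - ltrans s0 g t\<bar> < e/2"
      using U V by auto
    show "\<bar>ltrans s (\<lambda>t. f t + g t) t - ltrans s0 (\<lambda>t. f t + g t) t\<bar> < e"
    proof -
      note h = hh[unfolded ltrans_def]
      have "\<bar>(f (s*t) - f (s0*t)) + (g (s*t) - g (s0*t))\<bar> < e"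
        using abs_triangle_ineq[of "f (s*t) - f (s0*t)" "g (s*t) - g (s0*t)"] h by linarith
      moreover have "f (s*t) + g (s*t) - (f (s0*t) + g (s0*t)) = (f (s*t) - f (s0*t)) + (g (s*t) - g (s0*t))"
        by simp
      ultimately show ?thesis by (simp add: ltrans_def)
    qed
  qed (use U V in auto)
qed

lemma LUC_scale:
  assumes f: "f \<in> LUC"
  shows "(\<lambda>t. c * f t) \<in> LUC"
  unfolding LUC_def mem_Collect_eq
proof (intro conjI allI impI)
  from f obtain a where "\<forall>t. norm (f t) \<le> a"
    unfolding LUC_def bounded_iff by auto
  then show "bounded (range (\<lambda>t. c * f t))" unfolding bounded_iff
    by (intro exI[of _ "\<bar>c\<bar> * a"]) (auto simp: abs_mult intro: mult_left_mono)
  show "continuous_on UNIV (\<lambda>t. c * f t)"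
    using f unfolding LUC_def by (auto intro: continuous_intros)
  fix s0 :: 'a and e :: real assume e: "e > 0"
  have e': "e / (\<bar>c\<bar> + 1) > 0" using e by auto
  obtain U where U: "open U" "s0 \<in> U" "\<forall>s\<in>U. \<forall>t. \<bar>ltrans s f t - ltrans s0 f t\<bar> < e / (\<bar>c\<bar> + 1)"
  proof -
    have "\<forall>e>0. \<exists>U. open U \<and> s0 \<in> U \<and> (\<forall>s\<in>U. \<forall>t. \<bar>ltrans s f t - ltrans s0 f t\<bar> < e)"
      using f unfolding LUC_def by blast
    then show ?thesis using e' that by blast
  qed
  show "\<exists>U. open U \<and> s0 \<in> U \<and> (\<forall>s\<in>U. \<forall>t. \<bar>ltrans s (\<lambda>t. c * f t) t - ltrans s0 (\<lambda>t. c * f t) t\<bar> < e)"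
  proof (intro exI[of _ U] conjI ballI allI)
    fix s t assume "s \<in> U"
    then have h: "\<bar>ltrans s f t - ltrans s0 f t\<bar> < e / (\<bar>c\<bar> + 1)" using U by auto
    have "ltrans s (\<lambda>t. c * f t) t - ltrans s0 (\<lambda>t. c * f t) t = c * (ltrans s f t - ltrans s0 f t)"
      by (simp add: ltrans_def algebra_simps)
    then have "\<bar>ltrans s (\<lambda>t. c * f t) t - ltrans s0 (\<lambda>t. c * f t) t\<bar> = \<bar>c\<bar> * \<bar>ltrans s f t - ltrans s0 f t\<bar>"
      by (simp add: abs_mult)
    also have "\<dots> \<le> \<bar>c\<bar> * (e / (\<bar>c\<bar> + 1))" using h by (intro mult_left_mono) auto
    also have "\<dots> < e" using e by (simp add: field_simps)
    finally show "\<bar>ltrans s (\<lambda>t. c * f t) t - ltrans s0 (\<lambda>t. c * f t) t\<bar> < e" .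
  qed (use U in auto)
qed

lemma mean_le:
  fixes \<mu> :: "('s::{topological_space,semigroup_mult} \<Rightarrow> real) \<Rightarrow> real"
  assumes add: "\<forall>f\<in>LUC. \<forall>g\<in>LUC. \<mu> (\<lambda>t. f t + g t) = \<mu> f + \<mu> g"
    and sc: "\<forall>f\<in>LUC. \<forall>c. \<mu> (\<lambda>t. c * f t) = c * \<mu> f"
    and nm: "\<forall>f\<in>LUC. \<bar>\<mu> f\<bar> \<le> (SUP t. \<bar>f t\<bar>)"
    and one: "\<mu> (\<lambda>_. 1) = 1"
    and f: "f \<in> LUC" and le: "\<And>t. f t \<le> c"
  shows "\<mu> f \<le> c"
proof -
  from f obtain B where B: "\<forall>t. \<bar>f t\<bar> \<le> B"
    unfolding LUC_def bounded_iff by auto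
  define K where "K = (c + B) / 2"
  have h1: "- f undefined \<le> B" using B abs_le_iff by blast
  then have "0 \<le> c + B" using le[of undefined] by linarith
  then have K: "K \<ge> 0" unfolding K_def by simp
  have cst: "\<mu> (\<lambda>_. a) = a" for a
  proof -
    have "\<mu> (\<lambda>t. a * (\<lambda>_. 1) t) = a * \<mu> (\<lambda>_. 1)" using bspec[OF sc LUC_const[of 1], THEN spec[of _ a]] by simp
    then show ?thesis using one by simp
  qed
  define h where "h = (\<lambda>t. (\<lambda>_. c - K) t + (\<lambda>t. (-1) * f t) t)"
  have "\<mu> h = \<mu> (\<lambda>_. c - K) + \<mu> (\<lambda>t. (-1) * f t)"
    unfolding h_def using bspec[OF bspec[OF add LUC_const[of "c - K"]] LUC_scale[OF f, of "-1"]] by simp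
  moreover have "\<mu> (\<lambda>t. (-1) * f t) = (-1) * \<mu> f" using bspec[OF sc f, THEN spec[of _ "-1"]] by simp
  ultimately have e1: "\<mu> h = (c - K) - \<mu> f" using cst by simp
  have "h \<in> LUC" unfolding h_def by (intro LUC_add LUC_const LUC_scale f)
  then have e2: "\<bar>\<mu> h\<bar> \<le> (SUP t. \<bar>h t\<bar>)" using nm by blast
  have e3: "(SUP t. \<bar>h t\<bar>) \<le> K"
  proof (rule cSUP_least)
    fix t
    have "h t = (c - f t) - K" unfolding h_def by simp
    moreover have "c - f t \<le> 2 * K" "0 \<le> c - f t"
      using B[rule_format, of t] le[of t] unfolding K_def by (auto simp: abs_le_iff)
    ultimately show "\<bar>h t\<bar> \<le> K" by linarith
  qed simp
  have "\<bar>c - K - \<mu> f\<bar> \<le> K" using e1 e2 e3 by simp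
  then show ?thesis by (simp add: abs_le_iff)
qed

lemma mean_ge:
  fixes \<mu> :: "('s::{topological_space,semigroup_mult} \<Rightarrow> real) \<Rightarrow> real"
  assumes add: "\<forall>f\<in>LUC. \<forall>g\<in>LUC. \<mu> (\<lambda>t. f t + g t) = \<mu> f + \<mu> g"
    and sc: "\<forall>f\<in>LUC. \<forall>c. \<mu> (\<lambda>t. c * f t) = c * \<mu> f"
    and nm: "\<forall>f\<in>LUC. \<bar>\<mu> f\<bar> \<le> (SUP t. \<bar>f t\<bar>)"
    and one: "\<mu> (\<lambda>_. 1) = 1"
    and f: "f \<in> LUC" and le: "\<And>t. f t \<ge> c"
  shows "\<mu> f \<ge> c"
proof -
  have "\<mu> (\<lambda>t. (-1) * f t) \<le> -c"
    by (rule mean_le[OF add sc nm one LUC_scale[OF f]]) (simp add: le)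
  moreover have "\<mu> (\<lambda>t. (-1) * f t) = (-1) * \<mu> f" using bspec[OF sc f, THEN spec[of _ "-1"]] by simp
  ultimately have "(-1) * \<mu> f \<le> -c" by simp
  then show ?thesis by simp
qed



theorem theorem4p9:
  fixes T :: "'s::{t2_space,semigroup_mult} \<Rightarrow> 'm::metric_space \<Rightarrow> 'm"
  assumes "compact (UNIV :: 'm set)"
    and "semitopological_semigroup TYPE('s)"
    and "left_reversible TYPE('s) \<or> left_amenable TYPE('s)"
    and "\<And>s t. T (s * t) = T s \<circ> T t"
    and "continuous_on UNIV (\<lambda>(s, x). T s x)"
    and "\<exists>G. (\<forall>g\<in>G. unif_asymp_regular g) \<and> range T = gen_semigroup G"
  shows "\<exists>r \<in> closure (range T). r \<circ> r = r \<and> range r = {x. \<forall>s. T s x = x}"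
proof -
  note cM = assms(1) and mult = assms(4) and cT = assms(5)
  obtain G where G: "\<forall>g\<in>G. unif_asymp_regular g" "range T = gen_semigroup G"
    using assms(6) by blast
  define A where "A = {a. T a \<in> G}"
  have contTa: "continuous_on UNIV (T a)" for a using cont_section[OF cT] by blast
  have contTx: "continuous_on UNIV (\<lambda>t. T t x)" for x using cont_section[OF cT] by blast
  have pow: "\<exists>b. T b = T a ^^ Suc n" for a n
  proof (induction n)
    case 0 show ?case by (rule exI[of _ a]) simp
  next
    case (Suc n)
    then obtain b where "T b = T a ^^ Suc n" by blast
    then show ?case by (intro exI[of _ "a * b"]) (simp add: mult)
  qed
  have uar: "\<exists>b. \<forall>y. dist (T a (T b y)) (T b y) \<le> \<epsilon>" if aA: "a \<in> A" and ep: "\<epsilon> > 0" for a \<epsilon>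
  proof -
    define g where "g = T a"
    have "unif_asymp_regular g" using aA G(1) by (simp add: A_def g_def)
    then have bdd: "\<And>n. bdd_above (range (\<lambda>x. dist ((g ^^ Suc n) x) ((g ^^ n) x)))"
      and lim: "(\<lambda>n. SUP x. dist ((g ^^ Suc n) x) ((g ^^ n) x)) \<longlonglongrightarrow> 0"
      unfolding unif_asymp_regular_def by auto
    have "eventually (\<lambda>n. (SUP x. dist ((g ^^ Suc n) x) ((g ^^ n) x)) < \<epsilon>) sequentially"
      using order_tendstoD(2)[OF lim ep] .
    then obtain N where N: "\<And>n. n \<ge> N \<Longrightarrow> (SUP x. dist ((g ^^ Suc n) x) ((g ^^ n) x)) < \<epsilon>"
      unfolding eventually_sequentially by blast
    obtain b where b: "T b = g ^^ Suc N" using pow g_def by blast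
    show ?thesis
    proof (intro exI[of _ b] allI)
      fix y
      have "dist (T a (T b y)) (T b y) = dist ((g ^^ Suc (Suc N)) y) ((g ^^ Suc N) y)"
        by (simp add: b g_def)
      also have "\<dots> \<le> (SUP x. dist ((g ^^ Suc (Suc N)) x) ((g ^^ Suc N) x))"
        by (rule cSUP_upper[OF UNIV_I bdd])
      also have "\<dots> < \<epsilon>" using N[of "Suc N"] by simp
      finally show "dist (T a (T b y)) (T b y) \<le> \<epsilon>" by simp
    qed
  qed
  have fip: "\<exists>t. \<forall>p\<in>P. dist (T (fst p) (T t (snd p))) (T t (snd p)) \<le> \<epsilon>"
    if finP: "finite P" and PA: "P \<subseteq> A \<times> UNIV" and ep: "\<epsilon> > 0" for P \<epsilon>
    using assms(3)
  proof
    assume rev: "left_reversible TYPE('s)"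
    define D where "D a = {t. \<forall>y. dist (T a (T t y)) (T t y) \<le> \<epsilon>}" for a
    have clD: "closed (D a)" for a
      unfolding D_def
      by (intro closed_Collect_all closed_Collect_le continuous_intros cont_comp_univ[OF contTa contTx] contTx)
    have idD: "t * s \<in> D a" if "t \<in> D a" for t s a
      using that by (simp add: D_def mult)
    have neD: "D a \<noteq> {}" if "a \<in> A" for a
      using uar[OF that ep] by (auto simp: D_def)
    have ideal: "closed (\<Inter>a\<in>E. D a) \<and> right_ideal (\<Inter>a\<in>E. D a)" if "finite E" "E \<subseteq> A" for E
      using that
    proof (induction E rule: finite_induct)
      case empty then show ?case by (simp add: right_ideal_def)
    next
      case (insert a E)
      then have IH: "closed (\<Inter>a\<in>E. D a)" "right_ideal (\<Inter>a\<in>E. D a)" and aA: "a \<in> A" by auto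
      have rD: "right_ideal (D a)" using neD[OF aA] idD by (auto simp: right_ideal_def)
      have "D a \<inter> (\<Inter>a\<in>E. D a) \<noteq> {}"
        using rev IH clD[of a] rD unfolding left_reversible_def by blast
      then show ?case using IH clD[of a] idD
        by (auto simp: right_ideal_def)
    qed
    have sub: "fst ` P \<subseteq> A" using PA by auto
    have "right_ideal (\<Inter>a\<in>fst ` P. D a)" using ideal[OF finite_imageI[OF finP] sub] by blast
    then obtain t where "t \<in> (\<Inter>a\<in>fst ` P. D a)" unfolding right_ideal_def by blast
    then show ?thesis by (intro exI[of _ t]) (auto simp: D_def)
  next
    assume am: "left_amenable TYPE('s)"
    obtain \<mu> :: "('s \<Rightarrow> real) \<Rightarrow> real" where
      add: "\<forall>f\<in>LUC. \<forall>g\<in>LUC. \<mu> (\<lambda>t. f t + g t) = \<mu> f + \<mu> g" and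
      sc: "\<forall>f\<in>LUC. \<forall>c. \<mu> (\<lambda>t. c * f t) = c * \<mu> f" and
      nm: "\<forall>f\<in>LUC. \<bar>\<mu> f\<bar> \<le> (SUP t. \<bar>f t\<bar>)" and
      one: "\<mu> (\<lambda>_. 1) = 1" and
      inv: "\<forall>f\<in>LUC. \<forall>s. \<mu> (ltrans s f) = \<mu> f"
      using am unfolding left_amenable_def by blast
    define phi where "phi p = (\<lambda>t. dist (T (fst p) (T t (snd p))) (T t (snd p)))" for p
    have phiL: "phi p \<in> LUC" for p
      unfolding phi_def using phi_LUC[OF cM cT mult contTa continuous_on_id, of "fst p" "snd p"] by simp
    define \<delta> where "\<delta> = \<epsilon> / (real (card P) + 1)"
    have dp: "\<delta> > 0" using ep by (simp add: \<delta>_def)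
    have bnd: "\<mu> (phi p) \<le> \<delta>" if "p \<in> A \<times> UNIV" for p
    proof -
      obtain a x where p: "p = (a, x)" by (cases p)
      with that have aA: "a \<in> A" by auto
      obtain b where b: "\<forall>y. dist (T a (T b y)) (T b y) \<le> \<delta>" using uar[OF aA dp] by blast
      have eq: "ltrans b (phi p) = (\<lambda>t. dist ((\<lambda>y. T a (T b y)) (T t x)) (T b (T t x)))"
        by (simp add: ltrans_def phi_def p mult)
      have cab: "continuous_on UNIV (\<lambda>y. T a (T b y))" by (rule cont_comp_univ[OF contTa contTa])
      have L: "ltrans b (phi p) \<in> LUC"
        unfolding eq by (rule phi_LUC[OF cM cT mult cab contTa])
      have "\<mu> (ltrans b (phi p)) \<le> \<delta>"
        by (rule mean_le[OF add sc nm one L]) (simp add: eq b)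
      then show ?thesis using inv phiL by simp
    qed
    have sumP: "(\<lambda>t. \<Sum>p\<in>Q. phi p t) \<in> LUC \<and> \<mu> (\<lambda>t. \<Sum>p\<in>Q. phi p t) \<le> real (card Q) * \<delta>"
      if "finite Q" "Q \<subseteq> A \<times> UNIV" for Q
      using that
    proof (induction Q rule: finite_induct)
      case empty
      have "\<mu> (\<lambda>t. 0) \<le> 0" by (rule mean_le[OF add sc nm one LUC_const]) simp
      then show ?case using LUC_const[of 0] by simp
    next
      case (insert p Q)
      then have IH: "(\<lambda>t. \<Sum>p\<in>Q. phi p t) \<in> LUC" "\<mu> (\<lambda>t. \<Sum>p\<in>Q. phi p t) \<le> real (card Q) * \<delta>"
        and pA: "p \<in> A \<times> UNIV" by auto
      have eq: "(\<lambda>t. \<Sum>p\<in>insert p Q. phi p t) = (\<lambda>t. phi p t + (\<Sum>p\<in>Q. phi p t))"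
        using insert.hyps by simp
      have "\<mu> (\<lambda>t. phi p t + (\<Sum>p\<in>Q. phi p t)) = \<mu> (phi p) + \<mu> (\<lambda>t. \<Sum>p\<in>Q. phi p t)"
        using bspec[OF bspec[OF add phiL[of p]] IH(1)] by simp
      moreover have "card (insert p Q) = Suc (card Q)" using insert.hyps by simp
      ultimately show ?case unfolding eq using bnd[OF pA] IH LUC_add[OF phiL IH(1)]
        by (simp add: algebra_simps)
    qed
    show ?thesis
    proof (rule ccontr)
      assume "\<not> ?thesis"
      then have ex: "\<forall>t. \<exists>p\<in>P. phi p t > \<epsilon>" by (auto simp: phi_def not_le)
      have ge: "(\<Sum>p\<in>P. phi p t) \<ge> \<epsilon>" for t
      proof -
        obtain p where "p \<in> P" "phi p t > \<epsilon>" using ex by blast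
        moreover have "phi p t \<le> (\<Sum>p\<in>P. phi p t)"
          by (rule member_le_sum[OF \<open>p \<in> P\<close> _ finP]) (simp add: phi_def)
        ultimately show ?thesis by simp
      qed
      have "\<mu> (\<lambda>t. \<Sum>p\<in>P. phi p t) \<ge> \<epsilon>"
        by (rule mean_ge[OF add sc nm one]) (use sumP[OF finP PA] ge in auto)
      moreover have "\<mu> (\<lambda>t. \<Sum>p\<in>P. phi p t) \<le> real (card P) * \<delta>" using sumP[OF finP PA] by blast
      moreover have "real (card P) * \<delta> < \<epsilon>"
        using ep by (simp add: \<delta>_def field_simps)
      ultimately show False by simp
    qed
  qed
  have cF: "compact (UNIV :: ('m \<Rightarrow> 'm) set)"
  proof -
    have "compact_space (euclidean :: 'm topology)" using cM by (simp add: compact_space_def)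
    then have "compact_space (product_topology (\<lambda>i::'m. (euclidean::'m topology)) UNIV)"
      using compact_space_product_topology by blast
    then show ?thesis by (simp add: euclidean_product_topology compact_space_def)
  qed
  have cS: "compact (closure (range T))"
    using compact_Int_closed[OF cF closed_closure[of "range T"]] by simp
  define I where "I = A \<times> (UNIV :: 'm set) \<times> (UNIV :: nat set)"
  define Fm where "Fm i = {p :: 'm \<Rightarrow> 'm. dist (T (fst i) (p (fst (snd i)))) (p (fst (snd i))) \<le> 1 / real (Suc (snd (snd i)))}" for i
  have "closure (range T) \<inter> (\<Inter>i\<in>I. Fm i) \<noteq> {}"
  proof (rule compact_imp_fip_image[OF cS])
    fix i :: "'s \<times> 'm \<times> nat"
    have c1: "continuous_on UNIV (\<lambda>p::'m\<Rightarrow>'m. p (fst (snd i)))" by simp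
    show "closed (Fm i)" unfolding Fm_def
      by (intro closed_Collect_le continuous_intros cont_comp_univ[OF contTa c1] c1)
  next
    fix I' assume I': "finite I'" "I' \<subseteq> I"
    define N where "N = (\<Sum>i\<in>I'. snd (snd i))"
    define P where "P = (\<lambda>i. (fst i, fst (snd i))) ` I'"
    have "finite P" "P \<subseteq> A \<times> UNIV" using I' by (auto simp: P_def I_def)
    then obtain t where t: "\<forall>p\<in>P. dist (T (fst p) (T t (snd p))) (T t (snd p)) \<le> 1 / real (Suc N)"
      using fip[of P "1 / real (Suc N)"] by auto
    have "T t \<in> Fm i" if "i \<in> I'" for i
    proof -
      have "snd (snd i) \<le> N" unfolding N_def by (rule member_le_sum[OF that _ I'(1)]) simp
      then have le: "1 / real (Suc N) \<le> 1 / real (Suc (snd (snd i)))"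
        by (simp add: frac_le)
      have mem: "(fst i, fst (snd i)) \<in> P" using that by (simp add: P_def)
      have d: "dist (T (fst i) (T t (fst (snd i)))) (T t (fst (snd i))) \<le> 1 / real (Suc N)"
        using bspec[OF t mem] by simp
      show ?thesis unfolding Fm_def mem_Collect_eq by (rule order_trans[OF d le])
    qed
    moreover have "T t \<in> closure (range T)" using closure_subset[of "range T"] rangeI[of T t] by (rule subsetD)
    ultimately have "T t \<in> closure (range T) \<inter> (\<Inter>i\<in>I'. Fm i)" by blast
    then show "closure (range T) \<inter> (\<Inter>i\<in>I'. Fm i) \<noteq> {}" by blast
  qed
  then obtain r where rS: "r \<in> closure (range T)" and rF: "\<And>i. i \<in> I \<Longrightarrow> r \<in> Fm i" by blast
  have fixA: "T a (r x) = r x" if "a \<in> A" for a x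
  proof (rule ccontr)
    assume "T a (r x) \<noteq> r x"
    then have "dist (T a (r x)) (r x) > 0" by simp
    then obtain n where n: "inverse (real (Suc n)) < dist (T a (r x)) (r x)"
      using reals_Archimedean by blast
    have "r \<in> Fm (a, x, n)" using rF that by (simp add: I_def)
    then show False using n by (simp add: Fm_def inverse_eq_divide)
  qed
  have fixG: "\<forall>x. f (r x) = r x" if "f \<in> gen_semigroup G" for f
    using that
  proof (induction rule: gen_semigroup.induct)
    case (base g)
    then have "g \<in> range T" using G(2) gen_semigroup.base by blast
    then obtain a where "g = T a" by blast
    with base have "a \<in> A" by (simp add: A_def)
    then show ?case using fixA \<open>g = T a\<close> by simp
  next
    case (comp f g) then show ?case by simp
  qed
  have fixr: "T s (r x) = r x" for s x
    using fixG[of "T s"] G(2) by blast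
  have idF: "r x = x" if "\<forall>s. T s x = x" for x
  proof -
    have cl: "closed {p :: 'm \<Rightarrow> 'm. p x = x}"
      by (rule closed_Collect_eq) (simp_all add: continuous_on_const)
    have "range T \<subseteq> {p. p x = x}" using that by auto
    then have "closure (range T) \<subseteq> {p. p x = x}" using closure_minimal cl by blast
    then show ?thesis using rS by blast
  qed
  show ?thesis
  proof (intro bexI[OF _ rS] conjI)
    show "r \<circ> r = r" using idF fixr by (auto simp: fun_eq_iff)
    show "range r = {x. \<forall>s. T s x = x}"
    proof
      show "range r \<subseteq> {x. \<forall>s. T s x = x}" using fixr by auto
      show "{x. \<forall>s. T s x = x} \<subseteq> range r"
      proof
        fix x assume "x \<in> {x. \<forall>s. T s x = x}"
        then have "r x = x" using idF by simp
        then show "x \<in> range r" using rangeI[of r x] by simp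
      qed
    qed
  qed
qed

end
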